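(* Let $p>0$ and let $f$ be a $p$-knowable Boolean function. Then for every $k\in\mathbb N$, $$I_k(f)\le\frac{\mathbb E[(\max W(f))^p]}{k^p}.$$
   Context: Let $\Omega=\{-1,1\}$ and $\Omega^\infty=\{-1,1\}^{\mathbb N}$ with the uniform product probability measure; $\omega$ denotes a uniformly random element. A Boolean function is a measurable map $f:\Omega^\infty\to\Omega$. $\omega^{(k)}$ is $\omega$ with bit $k$ flipped; $I_k(f)=\mathbb P(f(\omega^{(k)})\ne f(\omega))$. A set $W\subseteq\mathbb N$ is a witness set for $f$ at $\omega$ if there is an event $A$ with $\mathbb P(A)=1$ such that for all $\tilde\omega\in A$: if $\tilde\omega_i=\omega_i$ for all $i\in W$ then $f(\tilde\omega)=f(\omega)$. $f$ is finitary if almost surely a finite witness set exists; then $W(f)(\omega)$ denotes the least finite witness set in the order: smaller maximum first, then smaller cardinality, then lexicographic. $f$ is $p$-knowable if it is finitary and $\mathbb E[(\max W(f))^p]<\infty$. *)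

theory Defs
  imports "HOL-Probability.Probability"
begin

definition OmegaInf :: "(nat \<Rightarrow> int) measure" where
  "OmegaInf = (\<Pi>\<^sub>M i\<in>{1..}. uniform_count_measure {-1, 1::int})"

definition flip_bit :: "nat \<Rightarrow> (nat \<Rightarrow> int) \<Rightarrow> (nat \<Rightarrow> int)" where
  "flip_bit k x = x(k := - (x k))"

definition boolean_fun :: "((nat \<Rightarrow> int) \<Rightarrow> int) \<Rightarrow> bool" where
  "boolean_fun f \<longleftrightarrow> f \<in> OmegaInf \<rightarrow>\<^sub>M count_space {-1, 1}"

definition influence :: "((nat \<Rightarrow> int) \<Rightarrow> int) \<Rightarrow> nat \<Rightarrow> real" where
  "influence f k = measure OmegaInf {\<omega> \<in> space OmegaInf. f (flip_bit k \<omega>) \<noteq> f \<omega>}"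

definition witness_set :: "((nat \<Rightarrow> int) \<Rightarrow> int) \<Rightarrow> (nat \<Rightarrow> int) \<Rightarrow> nat set \<Rightarrow> bool" where
  "witness_set f \<omega> W \<longleftrightarrow> W \<subseteq> {1..} \<and>
     (\<exists>A \<in> sets OmegaInf. measure OmegaInf A = 1 \<and>
        (\<forall>\<omega>' \<in> A. (\<forall>i \<in> W. \<omega>' i = \<omega> i) \<longrightarrow> f \<omega>' = f \<omega>))"

definition finitary :: "((nat \<Rightarrow> int) \<Rightarrow> int) \<Rightarrow> bool" where
  "finitary f \<longleftrightarrow> (AE \<omega> in OmegaInf. \<exists>W. finite W \<and> witness_set f \<omega> W)"

definition maxset :: "nat set \<Rightarrow> nat" where
  "maxset W = (if W = {} then 0 else Max W)"

definition wset_less :: "nat set \<Rightarrow> nat set \<Rightarrow> bool" where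
  "wset_less W V \<longleftrightarrow> maxset W < maxset V \<or>
     (maxset W = maxset V \<and> (card W < card V \<or>
       (card W = card V \<and> ord_class.lexordp (sorted_list_of_set W) (sorted_list_of_set V))))"

definition Wf :: "((nat \<Rightarrow> int) \<Rightarrow> int) \<Rightarrow> (nat \<Rightarrow> int) \<Rightarrow> nat set" where
  "Wf f \<omega> = (THE W. finite W \<and> witness_set f \<omega> W \<and>
      (\<forall>V. finite V \<and> witness_set f \<omega> V \<and> V \<noteq> W \<longrightarrow> wset_less W V))"

definition moment_maxW :: "real \<Rightarrow> ((nat \<Rightarrow> int) \<Rightarrow> int) \<Rightarrow> ennreal" where
  "moment_maxW p f = (\<integral>\<^sup>+ \<omega>. ennreal (real (maxset (Wf f \<omega>)) powr p) \<partial>OmegaInf)"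

definition p_knowable :: "real \<Rightarrow> ((nat \<Rightarrow> int) \<Rightarrow> int) \<Rightarrow> bool" where
  "p_knowable p f \<longleftrightarrow> boolean_fun f \<and> finitary f \<and> moment_maxW p f < \<infinity>"

end

theory Submission
  imports Defs
begin



abbreviation "UU \<equiv> uniform_count_measure {-1, 1::int}"

abbreviation "II \<equiv> ({1..}::nat set)"

lemma prob_UU: "prob_space UU"
  by (rule prob_space_uniform_count_measure) auto

lemma prob_Omega: "prob_space OmegaInf"
  unfolding OmegaInf_def by (rule prob_space_PiM) (rule prob_UU)

lemma space_Omega: "space OmegaInf = {1..} \<rightarrow>\<^sub>E {-1,1}"
  unfolding OmegaInf_def by (simp add: space_PiM space_uniform_count_measure)

lemma flip_space: "k \<ge> 1 \<Longrightarrow> x \<in> space OmegaInf \<Longrightarrow> flip_bit k x \<in> space OmegaInf"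
  unfolding space_Omega flip_bit_def by (auto simp: PiE_iff extensional_def)

lemma neg_meas: "uminus \<in> UU \<rightarrow>\<^sub>M UU"
proof -
  have "uminus \<in> count_space {-1,1::int} \<rightarrow>\<^sub>M UU"
    by (simp add: measurable_count_space_eq1 space_uniform_count_measure)
  then show ?thesis
    by (subst measurable_cong_sets[OF sets_uniform_count_measure_count_space refl])
qed

lemma flip_meas: "k \<ge> 1 \<Longrightarrow> flip_bit k \<in> OmegaInf \<rightarrow>\<^sub>M OmegaInf"
proof -
  assume k: "k \<ge> 1"
  have comp: "(\<lambda>\<omega>. \<omega> j) \<in> Pi\<^sub>M II (\<lambda>_. UU) \<rightarrow>\<^sub>M UU" if "j \<in> II" for j
    by (rule measurable_component_singleton[OF that])
  show ?thesis
    unfolding OmegaInf_def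
  proof (rule measurable_PiM_single')
    fix i :: nat assume i: "i \<in> II"
    show "(\<lambda>\<omega>. flip_bit k \<omega> i) \<in> Pi\<^sub>M II (\<lambda>_. UU) \<rightarrow>\<^sub>M UU"
    proof (cases "i = k")
      case True
      have "(\<lambda>\<omega>. flip_bit k \<omega> i) = (\<lambda>\<omega>. uminus (\<omega> k))" by (simp add: flip_bit_def True)
      moreover have "(\<lambda>\<omega>. uminus (\<omega> k)) \<in> Pi\<^sub>M II (\<lambda>_. UU) \<rightarrow>\<^sub>M UU"
        by (rule measurable_compose[OF comp neg_meas]) (use k in simp)
      ultimately show ?thesis by simp
    next
      case False
      have "(\<lambda>\<omega>. flip_bit k \<omega> i) = (\<lambda>\<omega>. \<omega> i)" by (simp add: flip_bit_def False)
      then show ?thesis using comp[OF i] by simp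
    qed
  next
    show "flip_bit k \<in> space (Pi\<^sub>M II (\<lambda>_. UU)) \<rightarrow> (\<Pi>\<^sub>E i\<in>II. space UU)"
      using flip_space[OF k] unfolding OmegaInf_def by (simp add: space_PiM)
  qed
qed


lemma emeasure_UU_neg: "B \<subseteq> {-1,1} \<Longrightarrow> emeasure UU (uminus ` B) = emeasure UU B"
proof -
  assume B: "B \<subseteq> {-1,1}"
  have "uminus ` B \<subseteq> {-1,1::int}" using B by auto
  moreover have "card (uminus ` B) = card B" by (rule card_image) (auto simp: inj_on_def)
  ultimately show ?thesis using B by (simp add: emeasure_uniform_count_measure)
qed

lemma cyl_iff: "x \<in> space (PiM I M) \<Longrightarrow> x \<in> prod_emb I M J (PiE J A) \<longleftrightarrow> (\<forall>j\<in>J. x j \<in> A j)"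
  unfolding prod_emb_def by (auto simp: space_PiM PiE_iff)

lemma flip_preserves: assumes k: "k \<ge> 1"
  shows "distr OmegaInf OmegaInf (flip_bit k) = OmegaInf"
  unfolding OmegaInf_def
proof (rule measure_eqI_PiM_infinite[symmetric, OF refl])
  show "sets (distr (Pi\<^sub>M II (\<lambda>i. UU)) (Pi\<^sub>M II (\<lambda>i. UU)) (flip_bit k)) = sets (Pi\<^sub>M II (\<lambda>i. UU))" by simp
  interpret prob_space "Pi\<^sub>M II (\<lambda>i. UU)" using prob_Omega unfolding OmegaInf_def .
  show "finite_measure (Pi\<^sub>M II (\<lambda>i. UU))" by unfold_locales
  fix A J assume J: "finite J" "J \<subseteq> II" and A: "\<And>i. i \<in> J \<Longrightarrow> A i \<in> sets UU"
  define A' where "A' j = (if j = k then uminus ` A j else A j)" for j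
  have A'': "\<And>i. i \<in> J \<Longrightarrow> A' i \<in> sets UU" using A unfolding A'_def
    by (auto simp: sets_uniform_count_measure) (metis insertE singletonD subsetD)
  have eqv: "(\<forall>j\<in>J. flip_bit k x j \<in> A j) \<longleftrightarrow> (\<forall>j\<in>J. x j \<in> A' j)" for x
  proof -
    have neg: "\<And>(a::int) B. a \<in> uminus ` B \<longleftrightarrow> - a \<in> B" by force
    show ?thesis unfolding A'_def flip_bit_def by (auto simp: neg)
  qed
  have pre: "flip_bit k -` prod_emb II (\<lambda>i. UU) J (Pi\<^sub>E J A) \<inter> space (Pi\<^sub>M II (\<lambda>i. UU))
      = prod_emb II (\<lambda>i. UU) J (Pi\<^sub>E J A')"
  proof (rule set_eqI)
    fix x
    show "x \<in> flip_bit k -` prod_emb II (\<lambda>i. UU) J (Pi\<^sub>E J A) \<inter> space (Pi\<^sub>M II (\<lambda>i. UU))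
      \<longleftrightarrow> x \<in> prod_emb II (\<lambda>i. UU) J (Pi\<^sub>E J A')"
    proof (cases "x \<in> space (Pi\<^sub>M II (\<lambda>i. UU))")
      case True
      have fx: "flip_bit k x \<in> space (Pi\<^sub>M II (\<lambda>i. UU))" using flip_space[OF k] True unfolding OmegaInf_def by simp
      have "x \<in> flip_bit k -` prod_emb II (\<lambda>i. UU) J (Pi\<^sub>E J A) \<inter> space (Pi\<^sub>M II (\<lambda>i. UU))
         \<longleftrightarrow> flip_bit k x \<in> prod_emb II (\<lambda>i. UU) J (Pi\<^sub>E J A)" using True by blast
      also have "\<dots> \<longleftrightarrow> (\<forall>j\<in>J. flip_bit k x j \<in> A j)" by (rule cyl_iff[OF fx])
      also have "\<dots> \<longleftrightarrow> (\<forall>j\<in>J. x j \<in> A' j)" by (rule eqv)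
      also have "\<dots> \<longleftrightarrow> x \<in> prod_emb II (\<lambda>i. UU) J (Pi\<^sub>E J A')" by (rule cyl_iff[OF True, symmetric])
      finally show ?thesis .
    next
      case False
      have n: "x \<notin> prod_emb II (\<lambda>i. UU) J (Pi\<^sub>E J A')"
        using False prod_emb_subset_PiM[of II "\<lambda>i. UU" J "Pi\<^sub>E J A'"] by (meson subsetD)
      show ?thesis using False n by (metis IntD2)
    qed
  qed
  have "emeasure (distr (Pi\<^sub>M II (\<lambda>i. UU)) (Pi\<^sub>M II (\<lambda>i. UU)) (flip_bit k)) (prod_emb II (\<lambda>i. UU) J (Pi\<^sub>E J A))
     = emeasure (Pi\<^sub>M II (\<lambda>i. UU)) (prod_emb II (\<lambda>i. UU) J (Pi\<^sub>E J A'))"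
  proof -
    have meas: "flip_bit k \<in> Pi\<^sub>M II (\<lambda>i. UU) \<rightarrow>\<^sub>M Pi\<^sub>M II (\<lambda>i. UU)"
      using flip_meas[OF k] by (simp add: OmegaInf_def)
    have cs: "prod_emb II (\<lambda>i. UU) J (Pi\<^sub>E J A) \<in> sets (Pi\<^sub>M II (\<lambda>i. UU))"
      using J A by (intro sets_PiM_I) auto
    show ?thesis unfolding emeasure_distr[OF meas cs] pre ..
  qed
  also have "\<dots> = (\<Prod>j\<in>J. emeasure UU (A' j))"
    using J A'' by (intro emeasure_PiM_emb prob_UU) auto
  also have "\<dots> = (\<Prod>j\<in>J. emeasure UU (A j))"
    using A unfolding A'_def by (intro prod.cong refl) (auto simp: sets_uniform_count_measure emeasure_UU_neg)
  also have "\<dots> = emeasure (Pi\<^sub>M II (\<lambda>i. UU)) (prod_emb II (\<lambda>i. UU) J (Pi\<^sub>E J A))"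
    using J A by (intro emeasure_PiM_emb[symmetric] prob_UU) auto
  finally show "emeasure (Pi\<^sub>M II (\<lambda>i. UU)) (prod_emb II (\<lambda>i. UU) J (Pi\<^sub>E J A)) =
       emeasure (distr (Pi\<^sub>M II (\<lambda>i. UU)) (Pi\<^sub>M II (\<lambda>i. UU)) (flip_bit k)) (prod_emb II (\<lambda>i. UU) J (Pi\<^sub>E J A))" by (rule sym)
qed




lemma lex_irrefl: "\<not> ord_class.lexordp (xs::nat list) xs"
  by (simp add: lexordp_irreflexive)

lemma wset_less_irrefl: "\<not> wset_less W W"
  unfolding wset_less_def using lex_irrefl by auto

lemma wset_less_trans: "wset_less A B \<Longrightarrow> wset_less B C \<Longrightarrow> wset_less A C"
  unfolding wset_less_def
  by (elim disjE conjE) (auto intro: lexordp_trans)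

lemma wset_less_asym: "wset_less A B \<Longrightarrow> \<not> wset_less B A"
  using wset_less_trans wset_less_irrefl by blast

lemma wset_less_total: "finite A \<Longrightarrow> finite B \<Longrightarrow> A \<noteq> B \<Longrightarrow> wset_less A B \<or> wset_less B A"
proof -
  assume f: "finite A" "finite B" "A \<noteq> B"
  have "sorted_list_of_set A \<noteq> sorted_list_of_set B"
    using f by (metis set_sorted_list_of_set)
  then have "ord_class.lexordp (sorted_list_of_set A) (sorted_list_of_set B) \<or>
      ord_class.lexordp (sorted_list_of_set B) (sorted_list_of_set A)"
    using lexordp_linear[of "sorted_list_of_set A" "sorted_list_of_set B"] by auto
  then show ?thesis unfolding wset_less_def by auto
qed

lemma finite_min_wset:
  assumes "finite X" "X \<noteq> {}" "\<forall>W\<in>X. finite W"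
  shows "\<exists>W\<in>X. \<forall>V\<in>X. V \<noteq> W \<longrightarrow> wset_less W V"
  using assms
proof (induction X rule: finite_ne_induct)
  case (singleton x) then show ?case by auto
next
  case (insert x F)
  then obtain W where W: "W \<in> F" "\<forall>V\<in>F. V \<noteq> W \<longrightarrow> wset_less W V" by auto
  show ?case
  proof (cases "wset_less x W")
    case True
    then show ?thesis using W insert.hyps(2) wset_less_trans by (intro bexI[of _ x]) auto
  next
    case False
    then have "x \<noteq> W \<longrightarrow> wset_less W x" using wset_less_total insert.prems W(1) by auto
    then show ?thesis using W by (intro bexI[of _ W]) auto
  qed
qed

lemma Wf_witness:
  assumes ex: "\<exists>W. finite W \<and> witness_set f \<omega> W"
  shows "finite (Wf f \<omega>) \<and> witness_set f \<omega> (Wf f \<omega>)"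
proof -
  define S where "S = {W. finite W \<and> witness_set f \<omega> W}"
  define m0 where "m0 = (LEAST m. \<exists>W\<in>S. maxset W = m)"
  obtain W1 where "W1 \<in> S" using ex S_def by blast
  have ex0: "\<exists>m. \<exists>W\<in>S. maxset W = m" using \<open>W1 \<in> S\<close> by blast
  have "\<exists>W\<in>S. maxset W = m0" unfolding m0_def by (rule LeastI_ex[OF ex0])
  define S0 where "S0 = {W\<in>S. maxset W = m0}"
  have S0ne: "S0 \<noteq> {}" using \<open>\<exists>W\<in>S. maxset W = m0\<close> unfolding S0_def by blast
  have "S0 \<subseteq> Pow {0..m0}"
  proof
    fix W assume "W \<in> S0"
    then have fW: "finite W" and mW: "maxset W = m0" unfolding S0_def S_def by auto
    have "x \<le> m0" if "x \<in> W" for x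
    proof -
      have "W \<noteq> {}" using that by blast
      then have "maxset W = Max W" unfolding maxset_def by simp
      then show ?thesis using Max_ge[OF fW that] mW by simp
    qed
    then show "W \<in> Pow {0..m0}" by auto
  qed
  then have "finite S0" by (rule finite_subset) simp
  have allfin: "\<forall>W\<in>S0. finite W" unfolding S0_def S_def by blast
  obtain W where W: "W \<in> S0" "\<forall>V\<in>S0. V \<noteq> W \<longrightarrow> wset_less W V"
    using finite_min_wset[OF \<open>finite S0\<close> S0ne allfin] by blast
  have WS: "W \<in> S" and Wm: "maxset W = m0" using W(1) unfolding S0_def by auto
  have Wmin: "\<forall>V. finite V \<and> witness_set f \<omega> V \<and> V \<noteq> W \<longrightarrow> wset_less W V"
  proof (intro allI impI)
    fix V assume V: "finite V \<and> witness_set f \<omega> V \<and> V \<noteq> W"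
    then have VS: "V \<in> S" by (simp add: S_def)
    have "m0 \<le> maxset V" unfolding m0_def by (rule Least_le) (use VS in blast)
    show "wset_less W V"
    proof (cases "maxset V = m0")
      case True
      then have "V \<in> S0" using VS unfolding S0_def by blast
      then show ?thesis using W(2) V by blast
    next
      case False
      then have "maxset W < maxset V" using \<open>m0 \<le> maxset V\<close> Wm by simp
      then show ?thesis unfolding wset_less_def by simp
    qed
  qed
  define P where "P Y \<longleftrightarrow> finite Y \<and> witness_set f \<omega> Y \<and> (\<forall>V. finite V \<and> witness_set f \<omega> V \<and> V \<noteq> Y \<longrightarrow> wset_less Y V)" for Y
  have PW: "P W" unfolding P_def using WS Wmin unfolding S_def by blast
  have uniq: "Y = W" if "P Y" for Y
  proof (rule ccontr)
    assume ne: "Y \<noteq> W"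
    have "wset_less Y W" using that PW ne unfolding P_def by blast
    moreover have "wset_less W Y" using that PW ne unfolding P_def by blast
    ultimately show False using wset_less_asym by blast
  qed
  have "P (THE Y. P Y)" by (rule theI[of P W, OF PW uniq])
  moreover have "Wf f \<omega> = (THE Y. P Y)" unfolding Wf_def P_def by simp
  ultimately show ?thesis unfolding P_def by simp
qed


lemma compU[measurable]: "(\<lambda>x. x i) \<in> OmegaInf \<rightarrow>\<^sub>M count_space (UNIV::int set)"
proof (cases "i \<ge> 1")
  case True
  have "(\<lambda>x. x i) \<in> OmegaInf \<rightarrow>\<^sub>M UU" unfolding OmegaInf_def
    by (rule measurable_component_singleton) (use True in simp)
  then have "(\<lambda>x. x i) \<in> OmegaInf \<rightarrow>\<^sub>M count_space {-1,1}"
    by (simp add: measurable_cong_sets[OF refl sets_uniform_count_measure_count_space])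
  then show ?thesis using measurable_compose[OF _ measurable_count_space[of "\<lambda>x::int. x" "{-1,1}"]] by blast
next
  case False
  have "\<And>x. x \<in> space OmegaInf \<Longrightarrow> x i = undefined" using False by (auto simp: space_Omega PiE_def extensional_def)
  then show ?thesis using measurable_cong[of OmegaInf "\<lambda>x. x i" "\<lambda>x. undefined"] by simp
qed

theorem mainTheorem11:
  fixes p :: real and f :: "(nat \<Rightarrow> int) \<Rightarrow> int" and k :: nat
  assumes "p > 0" and "p_knowable p f" and "k \<ge> 1"
  shows "influence f k \<le> enn2real (moment_maxW p f) / real k powr p"
proof -
  interpret P: prob_space OmegaInf by (rule prob_Omega)
  have k: "k \<ge> 1" by fact
  have fm[measurable]: "f \<in> OmegaInf \<rightarrow>\<^sub>M count_space {-1,1}" and fin: "finitary f"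
    and mom: "moment_maxW p f < \<infinity>"
    using assms(2) by (auto simp: p_knowable_def boolean_fun_def)
  have fU[measurable]: "f \<in> OmegaInf \<rightarrow>\<^sub>M count_space UNIV"
    using measurable_compose[OF fm measurable_count_space[of "\<lambda>x::int. x" "{-1,1}"]] by simp
  have flm[measurable]: "flip_bit k \<in> OmegaInf \<rightarrow>\<^sub>M OmegaInf" using flip_meas[OF k] .
  define S where "S = {\<omega> \<in> space OmegaInf. f (flip_bit k \<omega>) \<noteq> f \<omega>}"
  have Ssets: "S \<in> sets OmegaInf" unfolding S_def by measurable
  define N where "N \<tau> b = {\<omega>'\<in>space OmegaInf. (\<forall>i\<in>{1..<k}. \<omega>' i = \<tau> i) \<and> f \<omega>' \<noteq> b}" for \<tau> :: "nat \<Rightarrow> int" and b :: int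
  have Nsets: "N \<tau> b \<in> sets OmegaInf" for \<tau> b unfolding N_def by measurable
  define T where "T = ({1..<k} \<rightarrow>\<^sub>E {-1,1::int}) \<times> {-1,1::int}"
  have "finite T" unfolding T_def by (intro finite_cartesian_product finite_PiE) auto
  have flipAE: "AE \<omega> in OmegaInf. \<forall>(\<tau>,b)\<in>T. emeasure OmegaInf (N \<tau> b) = 0 \<longrightarrow> flip_bit k \<omega> \<notin> N \<tau> b"
  proof (rule AE_finite_allI[OF \<open>finite T\<close>])
    fix s assume "s \<in> T"
    obtain \<tau> b where s: "s = (\<tau>, b)" by (cases s)
    show "AE \<omega> in OmegaInf. (case s of (\<tau>,b) \<Rightarrow> emeasure OmegaInf (N \<tau> b) = 0 \<longrightarrow> flip_bit k \<omega> \<notin> N \<tau> b)"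
    proof (cases "emeasure OmegaInf (N \<tau> b) = 0")
      case True
      then have "N \<tau> b \<in> null_sets OmegaInf" using Nsets by (simp add: null_sets_def)
      then have "AE x in OmegaInf. x \<notin> N \<tau> b" by (rule AE_not_in)
      then have "AE x in distr OmegaInf OmegaInf (flip_bit k). x \<notin> N \<tau> b"
        by (simp only: flip_preserves[OF k])
      then have "AE x in OmegaInf. flip_bit k x \<notin> N \<tau> b"
        by (subst (asm) AE_distr_iff[OF flm]) (use Nsets in auto)
      then show ?thesis using s by simp
    qed (simp add: s)
  qed
  have key: "AE \<omega> in OmegaInf. \<omega> \<in> S \<longrightarrow> k \<le> maxset (Wf f \<omega>)"
    using flipAE fin[unfolded finitary_def]
  proof (eventually_elim)
    case (elim \<omega>)
    show ?case
    proof (intro impI, rule ccontr)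
      assume \<omega>S: "\<omega> \<in> S" and lt: "\<not> k \<le> maxset (Wf f \<omega>)"
      have \<omega>sp: "\<omega> \<in> space OmegaInf" using \<omega>S S_def by auto
      define W where "W = Wf f \<omega>"
      have Wp: "finite W" "witness_set f \<omega> W" using Wf_witness elim(2) W_def by auto
      then obtain A where A: "A \<in> sets OmegaInf" "measure OmegaInf A = 1"
        "\<forall>\<omega>'\<in>A. (\<forall>i\<in>W. \<omega>' i = \<omega> i) \<longrightarrow> f \<omega>' = f \<omega>" and W1: "W \<subseteq> {1..}"
        unfolding witness_set_def by auto
      have Wk: "W \<subseteq> {1..<k}"
      proof
        fix i assume "i \<in> W"
        then have "i \<le> maxset W" using Wp(1) unfolding maxset_def by auto
        then show "i \<in> {1..<k}" using lt W_def W1 \<open>i \<in> W\<close> by auto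
      qed
      define \<tau> where "\<tau> = restrict \<omega> {1..<k}"
      define b where "b = f \<omega>"
      have "f \<omega> \<in> {-1,1}" using measurable_space[OF fm \<omega>sp] by simp
      moreover have "\<tau> \<in> {1..<k} \<rightarrow>\<^sub>E {-1,1}" using \<omega>sp unfolding \<tau>_def space_Omega by auto
      ultimately have "(\<tau>, b) \<in> T" unfolding T_def b_def by auto
      have "N \<tau> b \<subseteq> space OmegaInf - A"
      proof
        fix x assume x: "x \<in> N \<tau> b"
        have xsp: "x \<in> space OmegaInf" and xt: "\<forall>i\<in>{1..<k}. x i = \<tau> i" and xb: "f x \<noteq> b"
          using x unfolding N_def by blast+
        have "x \<notin> A"
        proof
          assume xA: "x \<in> A"
          have "\<forall>i\<in>W. x i = \<omega> i"
          proof
            fix i assume "i \<in> W"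
            then have "i \<in> {1..<k}" using Wk by blast
            then show "x i = \<omega> i" using xt unfolding \<tau>_def by simp
          qed
          then have "f x = f \<omega>" using A(3) xA by blast
          then show False using xb unfolding b_def by simp
        qed
        then show "x \<in> space OmegaInf - A" using xsp by blast
      qed
      moreover have "measure OmegaInf (space OmegaInf - A) = 0"
        using P.prob_compl[OF A(1)] A(2) by simp
      then have "emeasure OmegaInf (space OmegaInf - A) = 0"
        by (simp add: P.emeasure_eq_measure)
      moreover have "space OmegaInf - A \<in> sets OmegaInf" using A(1) by blast
      ultimately have "emeasure OmegaInf (N \<tau> b) \<le> 0"
        using emeasure_mono[of "N \<tau> b" "space OmegaInf - A" OmegaInf] by simp
      then have "emeasure OmegaInf (N \<tau> b) = 0" by simp
      then have "flip_bit k \<omega> \<notin> N \<tau> b" using bspec[OF elim(1) \<open>(\<tau>, b) \<in> T\<close>] by simp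
      moreover have "flip_bit k \<omega> \<in> N \<tau> b"
      proof -
        have "\<forall>i\<in>{1..<k}. flip_bit k \<omega> i = \<tau> i" unfolding \<tau>_def flip_bit_def by simp
        moreover have "f (flip_bit k \<omega>) \<noteq> b" using \<omega>S unfolding S_def b_def by blast
        ultimately show ?thesis using flip_space[OF k \<omega>sp] unfolding N_def by blast
      qed
      ultimately show False by blast
    qed
  qed
  have kp: "real k powr p > 0" using k by simp
  have "AE \<omega> in OmegaInf. ennreal (real k powr p) * indicator S \<omega> \<le> ennreal (real (maxset (Wf f \<omega>)) powr p)"
    using key
  proof (eventually_elim)
    case (elim \<omega>)
    show ?case
    proof (cases "\<omega> \<in> S")
      case True
      then have "real k powr p \<le> real (maxset (Wf f \<omega>)) powr p"
        using elim assms(1) k by (intro powr_mono2) auto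
      then show ?thesis using True by (simp add: ennreal_leI)
    qed simp
  qed
  then have "(\<integral>\<^sup>+ \<omega>. ennreal (real k powr p) * indicator S \<omega> \<partial>OmegaInf) \<le> moment_maxW p f"
    unfolding moment_maxW_def by (rule nn_integral_mono_AE)
  then have "ennreal (real k powr p) * emeasure OmegaInf S \<le> moment_maxW p f"
    using Ssets by (simp add: nn_integral_cmult_indicator)
  moreover have "emeasure OmegaInf S = ennreal (influence f k)"
    unfolding influence_def S_def[symmetric] by (simp add: P.emeasure_eq_measure)
  ultimately have "ennreal (real k powr p) * ennreal (influence f k) \<le> moment_maxW p f" by simp
  moreover have inf0: "influence f k \<ge> 0" unfolding influence_def by (rule measure_nonneg)
  ultimately have le: "ennreal (real k powr p * influence f k) \<le> moment_maxW p f"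
    using kp by (simp add: ennreal_mult)
  have "enn2real (ennreal (real k powr p * influence f k)) \<le> enn2real (moment_maxW p f)"
    by (rule enn2real_mono[OF le]) (use mom in simp)
  moreover have "real k powr p * influence f k \<ge> 0" using kp inf0 by simp
  ultimately have "real k powr p * influence f k \<le> enn2real (moment_maxW p f)" by simp
  then show ?thesis using kp by (simp add: pos_le_divide_eq mult.commute)
qed

end
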